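(* In the setting below, let $N=\lim_{t\to\infty}(S+tP)^{-1}$. If $r=0$ then $\|N\|_\infty=0$. If $r\ge1$, let $d=\sum_{i=1}^r|p_i-q_i|$; then $$\|N\|_\infty=\frac1\alpha+\frac{\ell}{\alpha(\alpha+\ell\gamma)}\max_{1\le i\le r}\frac{|p_i-q_i|\,(d-2|p_i-q_i|)}{p_i+q_i}.$$
   Context: Let $n\ge3$, $\ell>0$, $\alpha\ge(n-2)\ell$, $S=\alpha I_n+\ell\mathbf{1}_n\mathbf{1}_n^\top$. For a real matrix $P$, $\Delta_i(P)=|P_{ii}|-\sum_{j\ne i}|P_{ij}|$. A signless Laplacian is a real symmetric $n\times n$ matrix $P$ with $P_{ij}\in\{0,1\}$ for $i\ne j$, $P_{ii}\ge0$, and $\Delta_i(P)\in\{0,2\}$ for all $i$; its graph $G$ has vertex set $\{1,\dots,n\}$, an edge $\{i,j\}$ ($i\ne j$) whenever $P_{ij}=1$, and a self-loop $\{i,i\}$ whenever $\Delta_i(P)=2$ (graphs with self-loops are not bipartite). $r$ is the number of bipartite connected components $G_1,\dots,G_r$ of $G$, where $G_i$ has bipartition classes of sizes $p_i,q_i$; $\gamma=\sum_{i=1}^r\frac{(p_i-q_i)^2}{p_i+q_i}$. $\|A\|_\infty$ is the maximum absolute row sum. *)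

theory Defs
  imports "HOL-Analysis.Analysis"
begin

definition Delta :: "real^'n^'n \<Rightarrow> 'n \<Rightarrow> real" where
  "Delta P i = \<bar>P$i$i\<bar> - (\<Sum>j\<in>UNIV - {i}. \<bar>P$i$j\<bar>)"

definition signless_laplacian :: "real^'n^'n \<Rightarrow> bool" where
  "signless_laplacian P \<longleftrightarrow> transpose P = P
     \<and> (\<forall>i j. i \<noteq> j \<longrightarrow> P$i$j \<in> {0, 1})
     \<and> (\<forall>i. P$i$i \<ge> 0)
     \<and> (\<forall>i. Delta P i \<in> {0, 2})"

definition edge :: "real^'n^'n \<Rightarrow> 'n \<Rightarrow> 'n \<Rightarrow> bool" where
  "edge P i j \<longleftrightarrow> (i \<noteq> j \<and> P$i$j = 1) \<or> (i = j \<and> Delta P i = 2)"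

definition components :: "real^'n^'n \<Rightarrow> 'n set set" where
  "components P = {{j. (edge P)\<^sup>*\<^sup>* i j} | i. True}"

text \<open>X is one bipartition class of C (the other being C - X).\<close>
definition bipartition :: "real^'n^'n \<Rightarrow> 'n set \<Rightarrow> 'n set \<Rightarrow> bool" where
  "bipartition P C X \<longleftrightarrow> X \<subseteq> C \<and>
     (\<forall>i\<in>C. \<forall>j\<in>C. edge P i j \<longrightarrow> (i \<in> X \<longleftrightarrow> j \<notin> X))"

definition bipartite_components :: "real^'n^'n \<Rightarrow> 'n set set" where
  "bipartite_components P = {C \<in> components P. \<exists>X. bipartition P C X}"

text \<open>|p - q| for a bipartite component (well defined since the component is connected).\<close>
definition imbalance :: "real^'n^'n \<Rightarrow> 'n set \<Rightarrow> real" where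
  "imbalance P C = (let X = (SOME X. bipartition P C X) in
     \<bar>real (card X) - real (card (C - X))\<bar>)"

definition gamma :: "real^'n^'n \<Rightarrow> real" where
  "gamma P = (\<Sum>C\<in>bipartite_components P. (imbalance P C)^2 / real (card C))"

definition norm_inf :: "real^'n^'n \<Rightarrow> real" where
  "norm_inf A = Max (range (\<lambda>i. \<Sum>j\<in>UNIV. \<bar>A$i$j\<bar>))"

end

theory Submission
  imports Defs
begin

locale ctx =
  fixes P :: "real^'n^'n" and \<alpha> l :: real
  assumes n3: "CARD('n) \<ge> 3"
    and lpos: "l > 0"
    and alpha_ge: "\<alpha> \<ge> (real CARD('n) - 2) * l"
    and SL: "signless_laplacian P"
begin

lemma alpha_pos: "\<alpha> > 0"
proof -
  have "real CARD('n) - 2 \<ge> 1" using n3 by simp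
  hence "(real CARD('n) - 2) * l \<ge> l" using lpos by simp
  thus ?thesis using alpha_ge lpos by linarith
qed

lemma Psym: "P$i$j = P$j$i"
  using SL unfolding signless_laplacian_def transpose_def
  by (metis vec_lambda_beta)

lemma Poff: "i \<noteq> j \<Longrightarrow> P$i$j = 0 \<or> P$i$j = 1"
  using SL unfolding signless_laplacian_def by auto

lemma Pnn: "P$i$j \<ge> 0"
  using SL Poff unfolding signless_laplacian_def by (cases "i = j") force+

lemma Delta_cases: "Delta P i = 0 \<or> Delta P i = 2"
  using SL unfolding signless_laplacian_def by auto

lemma Delta_eq: "Delta P i = P$i$i - ((\<Sum>j\<in>UNIV. P$i$j) - P$i$i)"
proof -
  have "(\<Sum>j\<in>UNIV - {i}. \<bar>P$i$j\<bar>) = (\<Sum>j\<in>UNIV - {i}. P$i$j)"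
    using Pnn by simp
  also have "\<dots> = (\<Sum>j\<in>UNIV. P$i$j) - P$i$i"
    by (simp add: sum_diff1)
  finally show ?thesis unfolding Delta_def using Pnn[of i i] by simp
qed

lemma edge_sym: "edge P i j \<Longrightarrow> edge P j i"
  unfolding edge_def using Psym by metis

lemma rt_sym: "(edge P)\<^sup>*\<^sup>* i j \<Longrightarrow> (edge P)\<^sup>*\<^sup>* j i"
proof (induction rule: rtranclp_induct)
  case base then show ?case by simp
next
  case (step y z)
  then show ?case using edge_sym
    by (meson converse_rtranclp_into_rtranclp)
qed

definition comp :: "'n \<Rightarrow> 'n set" where "comp k = {j. (edge P)\<^sup>*\<^sup>* k j}"

lemma components_eq: "components P = range comp"
  unfolding components_def comp_def by auto

lemma in_comp_self: "k \<in> comp k" unfolding comp_def by simp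

lemma comp_eq: "j \<in> comp k \<Longrightarrow> comp j = comp k"
  unfolding comp_def using rt_sym
  by (auto intro: rtranclp_trans)

lemma comp_edge: "i \<in> comp k \<Longrightarrow> edge P i j \<Longrightarrow> j \<in> comp k"
  unfolding comp_def by (auto intro: rtranclp.rtrancl_into_rtrancl)

abbreviation "B \<equiv> bipartite_components P"

lemma B_sub: "C \<in> B \<Longrightarrow> C \<in> components P"
  unfolding bipartite_components_def by auto

lemma B_comp: "C \<in> B \<Longrightarrow> k \<in> C \<Longrightarrow> C = comp k"
proof -
  assume "C \<in> B" "k \<in> C"
  then obtain i where "C = comp i" using B_sub components_eq by auto
  then show ?thesis using comp_eq \<open>k \<in> C\<close> by simp
qed

lemma B_disj: "C \<in> B \<Longrightarrow> D \<in> B \<Longrightarrow> k \<in> C \<Longrightarrow> k \<in> D \<Longrightarrow> C = D"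
  using B_comp by blast

lemma finB: "finite B" by (rule finite_subset[of _ "Pow UNIV"]) auto

definition XX :: "'n set \<Rightarrow> 'n set" where "XX C = (SOME X. bipartition P C X)"

lemma XX_bip: "C \<in> B \<Longrightarrow> bipartition P C (XX C)"
  unfolding XX_def bipartite_components_def by (auto intro: someI_ex)

lemma XX_sub: "C \<in> B \<Longrightarrow> XX C \<subseteq> C"
  using XX_bip bipartition_def by blast

definition sg :: "'n set \<Rightarrow> 'n \<Rightarrow> real" where
  "sg C k = (if k \<in> XX C then 1 else if k \<in> C then -1 else 0)"

definition sC :: "'n set \<Rightarrow> real" where
  "sC C = real (card (XX C)) - real (card (C - XX C))"

definition mC :: "'n set \<Rightarrow> real" where "mC C = real (card C)"

lemma imb: "imbalance P C = \<bar>sC C\<bar>"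
  unfolding imbalance_def sC_def XX_def Let_def by simp

lemma gam: "gamma P = (\<Sum>C\<in>B. (sC C)^2 / mC C)"
  unfolding gamma_def imb mC_def by simp

lemma sg_out: "C \<in> B \<Longrightarrow> k \<notin> C \<Longrightarrow> sg C k = 0"
  using XX_sub unfolding sg_def by auto

lemma sg_sq: "C \<in> B \<Longrightarrow> k \<in> C \<Longrightarrow> sg C k * sg C k = 1"
  unfolding sg_def by auto

lemma sg_abs: "C \<in> B \<Longrightarrow> k \<in> C \<Longrightarrow> \<bar>sg C k\<bar> = 1"
  unfolding sg_def by auto

lemma mC_pos: "C \<in> B \<Longrightarrow> mC C > 0"
proof -
  assume "C \<in> B"
  then obtain i where "C = comp i" using B_sub components_eq by auto
  hence "C \<noteq> {}" using in_comp_self by auto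
  thus ?thesis unfolding mC_def by (simp add: card_gt_0_iff)
qed

lemma sg_edge: "C \<in> B \<Longrightarrow> i \<in> C \<Longrightarrow> edge P i j \<Longrightarrow> j \<in> C \<and> sg C j = - sg C i"
proof -
  assume C: "C \<in> B" "i \<in> C" "edge P i j"
  then have j: "j \<in> C" using B_comp comp_edge by metis
  have "i \<in> XX C \<longleftrightarrow> j \<notin> XX C" using XX_bip[OF C(1)] C j unfolding bipartition_def by blast
  then show ?thesis using j C unfolding sg_def by auto
qed

lemma sum_sg: "C \<in> B \<Longrightarrow> (\<Sum>k\<in>UNIV. sg C k) = sC C"
proof -
  assume C: "C \<in> B"
  have "sg C k = of_bool (k \<in> XX C) - of_bool (k \<in> C - XX C)" for k
    using XX_sub[OF C] unfolding sg_def by auto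
  hence "(\<Sum>k\<in>UNIV. sg C k) = (\<Sum>k\<in>UNIV. of_bool (k \<in> XX C)) - (\<Sum>k\<in>UNIV. (of_bool (k \<in> C - XX C)::real))"
    by (simp add: sum_subtractf)
  also have "\<dots> = sC C" unfolding sC_def
    by (simp add: sum.If_cases set_diff_eq)
  finally show ?thesis .
qed

lemma sum_sg2: "C \<in> B \<Longrightarrow> D \<in> B \<Longrightarrow> (\<Sum>k\<in>UNIV. sg C k * sg D k) = (if C = D then mC C else 0)"
proof -
  assume C: "C \<in> B" and D: "D \<in> B"
  have "sg C k * sg D k = (if C = D then of_bool (k \<in> C) else 0)" for k
    using sg_sq[OF C] sg_out[OF C] sg_out[OF D] B_disj[OF C D] by (cases "k \<in> C") auto
  then show ?thesis unfolding mC_def by (simp add: sum.If_cases)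
qed

lemma Pv: "C \<in> B \<Longrightarrow> (\<Sum>j\<in>UNIV. P$k$j * sg C j) = 0"
proof -
  assume C: "C \<in> B"
  show ?thesis
  proof (cases "k \<in> C")
    case False
    have "P$k$j * sg C j = 0" for j
    proof (cases "j = k")
      case True then show ?thesis using sg_out[OF C False] by simp
    next
      case jk: False
      show ?thesis
      proof (cases "P$k$j = 0")
        case False
        then have "edge P k j" using Poff jk unfolding edge_def by metis
        then have "edge P j k" by (rule edge_sym)
        then have "j \<notin> C" using False sg_edge[OF C, of j k] \<open>k \<notin> C\<close> by blast
        then show ?thesis using sg_out[OF C] by simp
      qed simp
    qed
    then have "(\<Sum>j\<in>UNIV. P$k$j * sg C j) = (\<Sum>j\<in>(UNIV::'n set). 0)"
      by (intro sum.cong) auto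
    then show ?thesis by simp
  next
    case True
    have D0: "Delta P k = 0"
    proof (rule ccontr)
      assume "Delta P k \<noteq> 0"
      then have "edge P k k" using Delta_cases unfolding edge_def by auto
      then show False using XX_bip[OF C] True unfolding bipartition_def by blast
    qed
    have "P$k$j * sg C j = (if j = k then P$k$k * sg C k else - P$k$j * sg C k)" for j
    proof (cases "j = k")
      case jk: False
      show ?thesis
      proof (cases "P$k$j = 0")
        case False
        then have "edge P k j" using Poff jk unfolding edge_def by metis
        then show ?thesis using sg_edge[OF C True] jk by simp
      qed (use jk in simp)
    qed simp
    then have "(\<Sum>j\<in>UNIV. P$k$j * sg C j) = (\<Sum>j\<in>UNIV. (if j = k then P$k$k * sg C k else - P$k$j * sg C k))"
      by simp
    also have "\<dots> = P$k$k * sg C k - (\<Sum>j\<in>UNIV - {k}. P$k$j * sg C k)"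
      by (simp add: sum.If_cases sum_negf Diff_eq Compl_eq)
    also have "\<dots> = sg C k * (P$k$k - ((\<Sum>j\<in>UNIV. P$k$j) - P$k$k))"
      by (simp add: sum_diff1 sum_distrib_left[symmetric] algebra_simps)
    also have "\<dots> = 0" using D0 Delta_eq by simp
    finally show ?thesis .
  qed
qed

lemma PT: "transpose P = P" using SL unfolding signless_laplacian_def by simp

lemma bil_sym: "w \<bullet> (P *v x) = x \<bullet> (P *v w)"
  by (metis PT dot_lmul_matrix inner_commute transpose_matrix_vector)

definition Q :: "'n \<Rightarrow> 'n \<Rightarrow> real" where "Q i j = (if i = j then 0 else P$i$j)"

lemma Q_nn: "Q i j \<ge> 0" unfolding Q_def using Pnn by simp

lemma Q_sym: "Q i j = Q j i" unfolding Q_def using Psym by simp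

lemma P_Q: "P$i$j = Q i j + (if i = j then P$i$i else 0)" unfolding Q_def by simp

lemma sumQ: "(\<Sum>j\<in>UNIV. Q i j) = (\<Sum>j\<in>UNIV. P$i$j) - P$i$i"
proof -
  have "(\<Sum>j\<in>UNIV. P$i$j) = (\<Sum>j\<in>UNIV. Q i j) + (\<Sum>j\<in>UNIV. (if i = j then P$i$i else 0))"
    by (subst P_Q) (simp add: sum.distrib)
  then show ?thesis by simp
qed

lemma Delta_Q: "Delta P i = P$i$i - (\<Sum>j\<in>UNIV. Q i j)"
  using Delta_eq sumQ by simp

lemma Delta_nn: "Delta P i \<ge> 0" using Delta_cases[of i] by linarith

lemma qf_expand: "x \<bullet> (P *v x) = (\<Sum>i\<in>UNIV. \<Sum>j\<in>UNIV. P$i$j * x$i * x$j)"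
  by (simp add: inner_vec_def matrix_vector_mult_def sum_distrib_left mult.assoc mult.left_commute)

lemma qf_id: "x \<bullet> (P *v x) = (\<Sum>i\<in>UNIV. Delta P i * (x$i)^2)
     + (1/2) * (\<Sum>i\<in>UNIV. \<Sum>j\<in>UNIV. Q i j * (x$i + x$j)^2)"
proof -
  have e1: "(\<Sum>i\<in>UNIV. \<Sum>j\<in>UNIV. P$i$j * x$i * x$j)
      = (\<Sum>i\<in>UNIV. \<Sum>j\<in>UNIV. Q i j * x$i * x$j) + (\<Sum>i\<in>UNIV. P$i$i * (x$i)^2)"
  proof -
    have pt: "P$i$j * x$i * x$j = Q i j * x$i * x$j + (if i = j then P$i$i * (x$i)^2 else 0)" for i j
      by (simp add: Q_def power2_eq_square)
    show ?thesis by (simp only: pt sum.distrib) simp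
  qed
  have swap: "(\<Sum>i\<in>UNIV. \<Sum>j\<in>UNIV. Q i j * (x$j)^2) = (\<Sum>i\<in>UNIV. \<Sum>j\<in>UNIV. Q i j * (x$i)^2)"
    by (subst sum.swap) (simp add: Q_sym)
  have e2: "(\<Sum>i\<in>UNIV. \<Sum>j\<in>UNIV. Q i j * (x$i + x$j)^2)
     = 2 * (\<Sum>i\<in>UNIV. \<Sum>j\<in>UNIV. Q i j * (x$i)^2) + 2 * (\<Sum>i\<in>UNIV. \<Sum>j\<in>UNIV. Q i j * x$i * x$j)"
  proof -
    have "(\<Sum>i\<in>UNIV. \<Sum>j\<in>UNIV. Q i j * (x$i + x$j)^2)
      = (\<Sum>i\<in>UNIV. \<Sum>j\<in>UNIV. Q i j * (x$i)^2) + (\<Sum>i\<in>UNIV. \<Sum>j\<in>UNIV. Q i j * (x$j)^2)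
        + 2 * (\<Sum>i\<in>UNIV. \<Sum>j\<in>UNIV. Q i j * x$i * x$j)"
      by (simp add: power2_sum distrib_left sum.distrib sum_distrib_left algebra_simps)
    then show ?thesis using swap by simp
  qed
  have e3: "(\<Sum>i\<in>UNIV. Delta P i * (x$i)^2) = (\<Sum>i\<in>UNIV. P$i$i * (x$i)^2) - (\<Sum>i\<in>UNIV. \<Sum>j\<in>UNIV. Q i j * (x$i)^2)"
    by (simp add: Delta_Q left_diff_distrib sum_subtractf sum_distrib_right)
  show ?thesis unfolding qf_expand e1 e2 e3 by (simp add: distrib_left)
qed

lemma qf_nn: "x \<bullet> (P *v x) \<ge> 0"
proof -
  have "(\<Sum>i\<in>UNIV. Delta P i * (x$i)^2) \<ge> 0" using Delta_nn by (simp add: sum_nonneg)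
  moreover have "(\<Sum>i\<in>UNIV. \<Sum>j\<in>UNIV. Q i j * (x$i + x$j)^2) \<ge> 0" using Q_nn by (simp add: sum_nonneg)
  ultimately show ?thesis using qf_id by simp
qed

lemma ker_edge:
  assumes x: "P *v x = 0" and e: "edge P i j"
  shows "x$j = - x$i"
proof -
  let ?T1 = "(\<Sum>i\<in>UNIV. Delta P i * (x$i)^2)"
  let ?T2 = "(\<Sum>i\<in>UNIV. \<Sum>j\<in>UNIV. Q i j * (x$i + x$j)^2)"
  have n1: "\<forall>i\<in>UNIV. Delta P i * (x$i)^2 \<ge> 0" using Delta_nn by simp
  have n2: "\<forall>i\<in>UNIV. \<forall>j\<in>UNIV. Q i j * (x$i + x$j)^2 \<ge> 0" using Q_nn by simp
  have n2': "\<forall>i\<in>UNIV. (\<Sum>j\<in>UNIV. Q i j * (x$i + x$j)^2) \<ge> 0" using n2 by (simp add: sum_nonneg)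
  have "?T1 \<ge> 0" "?T2 \<ge> 0" using n1 n2' by (simp_all add: sum_nonneg)
  moreover have "?T1 + (1/2) * ?T2 = 0" using qf_id[of x] x by simp
  ultimately have z1: "?T1 = 0" and z2: "?T2 = 0" by linarith+
  show ?thesis
  proof (cases "i = j")
    case True
    then have "Delta P i = 2" using e unfolding edge_def by simp
    moreover have "Delta P i * (x$i)^2 = 0" using z1 n1 by (simp add: sum_nonneg_eq_0_iff)
    ultimately show ?thesis using True by simp
  next
    case False
    then have "Q i j = 1" using e unfolding edge_def Q_def by simp
    moreover have "(\<Sum>j\<in>UNIV. Q i j * (x$i + x$j)^2) = 0" using z2 n2' by (simp add: sum_nonneg_eq_0_iff)
    then have "Q i j * (x$i + x$j)^2 = 0" using n2 by (simp add: sum_nonneg_eq_0_iff)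
    ultimately show ?thesis by simp
  qed
qed


lemma kerA:
  assumes x: "P *v x = 0" and C: "C \<in> B" and i: "i \<in> C" and j: "j \<in> C"
  shows "x$j * sg C j = x$i * sg C i"
proof -
  have Ci: "C = comp i" using B_comp C i by blast
  have "(edge P)\<^sup>*\<^sup>* i j" using j Ci comp_def by auto
  then show ?thesis
  proof (induction rule: rtranclp_induct)
    case base then show ?case by simp
  next
    case (step y z)
    have "y \<in> C" using step(1) Ci comp_def by auto
    then have "sg C z = - sg C y" using sg_edge[OF C _ step(2)] by blast
    moreover have "x$z = - x$y" using ker_edge[OF x step(2)] .
    ultimately show ?case using step(3) by simp
  qed
qed

lemma kerB:
  assumes x: "P *v x = 0" and nb: "comp k \<notin> B"
  shows "x$k = 0"
proof (rule ccontr)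
  assume nz: "x$k \<noteq> 0"
  have pm: "x$j = x$k \<or> x$j = - x$k" if "j \<in> comp k" for j
  proof -
    have "(edge P)\<^sup>*\<^sup>* k j" using that comp_def by auto
    then show ?thesis
    proof (induction rule: rtranclp_induct)
      case (step y z)
      then show ?case using ker_edge[OF x step(2)] by auto
    qed simp
  qed
  define X where "X = {j \<in> comp k. x$j = x$k}"
  have "bipartition P (comp k) X"
    unfolding bipartition_def
  proof (intro conjI ballI impI)
    show "X \<subseteq> comp k" unfolding X_def by auto
  next
    fix i j assume ij: "i \<in> comp k" "j \<in> comp k" "edge P i j"
    have "x$j = - x$i" using ker_edge[OF x ij(3)] .
    then show "(i \<in> X) = (j \<notin> X)" using pm[OF ij(1)] pm[OF ij(2)] nz ij unfolding X_def by auto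
  qed
  moreover have "comp k \<in> components P" using components_eq by auto
  ultimately have "comp k \<in> B" unfolding bipartite_components_def by auto
  then show False using nb by simp
qed

definition cc :: "real^'n \<Rightarrow> 'n set \<Rightarrow> real" where
  "cc x C = (\<Sum>j\<in>UNIV. sg C j * x$j) / mC C"

lemma sum_B_single:
  assumes C: "C \<in> B" and k: "k \<in> C"
  shows "(\<Sum>D\<in>B. f D * sg D k) = f C * sg C k"
proof -
  have "(\<Sum>D\<in>B. f D * sg D k) = f C * sg C k + (\<Sum>D\<in>B - {C}. f D * sg D k)"
    using finB C by (simp add: sum.remove)
  moreover have "(\<Sum>D\<in>B - {C}. f D * sg D k) = 0"
    using B_disj[OF C _ k] sg_out k by (intro sum.neutral) fastforce
  ultimately show ?thesis by simp
qed

lemma sum_B_none: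
  assumes "\<not> (\<exists>C\<in>B. k \<in> C)"
  shows "sg D k = 0 \<or> D \<notin> B"
  using assms sg_out by blast

lemma ker_decomp:
  assumes x: "P *v x = 0"
  shows "x$k = (\<Sum>C\<in>B. cc x C * sg C k)"
proof (cases "\<exists>C\<in>B. k \<in> C")
  case True
  then obtain C where C: "C \<in> B" "k \<in> C" by blast
  have "sg C j * x$j = (if j \<in> C then sg C k * x$k else 0)" for j
    using kerA[OF x C(1) C(2), of j] sg_out[OF C(1), of j] by (auto simp: mult.commute)
  then have "(\<Sum>j\<in>UNIV. sg C j * x$j) = mC C * (sg C k * x$k)"
    unfolding mC_def by (simp add: sum.If_cases)
  then have "cc x C * sg C k = x$k"
    unfolding cc_def using mC_pos[OF C(1)] sg_sq[OF C] by (simp add: algebra_simps)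
  then show ?thesis using sum_B_single[OF C] by simp
next
  case False
  then have "comp k \<notin> B" using in_comp_self by blast
  then have "x$k = 0" using kerB[OF x] by simp
  moreover have "(\<Sum>C\<in>B. cc x C * sg C k) = 0"
    using False sg_out by (intro sum.neutral) auto
  ultimately show ?thesis by simp
qed

definition vC :: "'n set \<Rightarrow> real^'n" where "vC C = (\<chi> k. sg C k)"
definition one :: "real^'n" where "one = (\<chi> k. 1)"
definition z :: "real^'n" where "z = (\<Sum>D\<in>B. (sC D / mC D) *\<^sub>R vC D)"
definition \<gamma> where "\<gamma> = gamma P"
definition \<beta> where "\<beta> = l / (\<alpha> + l * \<gamma>)"
definition N :: "real^'n^'n" where
  "N = (\<chi> k j. (1/\<alpha>) * ((\<Sum>D\<in>B. sg D k * sg D j / mC D) - \<beta> * z$k * z$j))"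
definition S :: "real^'n^'n" where "S = \<alpha> *\<^sub>R mat 1 + l *\<^sub>R (\<chi> i j. 1)"

lemma z_comp: "z$k = (\<Sum>D\<in>B. sC D / mC D * sg D k)"
  unfolding z_def vC_def by (simp add: sum_component)

lemma gamma_nn: "\<gamma> \<ge> 0"
  unfolding \<gamma>_def gam using mC_pos by (intro sum_nonneg divide_nonneg_pos) auto

lemma den_pos: "\<alpha> + l * \<gamma> > 0" using alpha_pos lpos gamma_nn by (simp add: add_pos_nonneg)

lemma beta_eq: "\<beta> * (\<alpha> + l * \<gamma>) = l" unfolding \<beta>_def using den_pos by simp

lemma Nv: "N *v y = (1/\<alpha>) *\<^sub>R ((\<Sum>D\<in>B. ((vC D \<bullet> y) / mC D) *\<^sub>R vC D) - (\<beta> * (z \<bullet> y)) *\<^sub>R z)"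
proof -
  have "(N *v y)$k = ((1/\<alpha>) *\<^sub>R ((\<Sum>D\<in>B. ((vC D \<bullet> y) / mC D) *\<^sub>R vC D) - (\<beta> * (z \<bullet> y)) *\<^sub>R z))$k" for k
  proof -
    have "(N *v y)$k = (\<Sum>j\<in>UNIV. (1/\<alpha>) * ((\<Sum>D\<in>B. sg D k * sg D j / mC D) - \<beta> * z$k * z$j) * y$j)"
      unfolding N_def by (simp add: matrix_vector_mult_def)
    also have "\<dots> = (1/\<alpha>) * ((\<Sum>j\<in>UNIV. \<Sum>D\<in>B. sg D k * sg D j / mC D * y$j) - \<beta> * z$k * (\<Sum>j\<in>UNIV. z$j * y$j))"
      by (simp add: sum_distrib_left sum_distrib_right sum_subtractf algebra_simps)
    also have "(\<Sum>j\<in>UNIV. \<Sum>D\<in>B. sg D k * sg D j / mC D * y$j) = (\<Sum>D\<in>B. (\<Sum>j\<in>UNIV. sg D j * y$j) / mC D * sg D k)"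
      by (subst sum.swap) (simp add: sum_distrib_left sum_distrib_right sum_divide_distrib algebra_simps)
    finally show ?thesis
      by (simp add: inner_vec_def vC_def sum_component algebra_simps)
  qed
  then show ?thesis by (simp add: vec_eq_iff)
qed

lemma inner_vv: "C \<in> B \<Longrightarrow> D \<in> B \<Longrightarrow> vC D \<bullet> vC C = (if C = D then mC C else 0)"
  unfolding vC_def inner_vec_def using sum_sg2[of D C] by (auto simp: mult.commute)

lemma inner_v1: "C \<in> B \<Longrightarrow> vC C \<bullet> one = sC C"
  unfolding vC_def one_def inner_vec_def using sum_sg by simp

lemma inner_zv: "C \<in> B \<Longrightarrow> z \<bullet> vC C = sC C"
proof -
  assume C: "C \<in> B"
  have "z \<bullet> vC C = (\<Sum>D\<in>B. (sC D / mC D) * (vC D \<bullet> vC C))"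
    unfolding z_def by (simp add: inner_sum_left)
  also have "\<dots> = (\<Sum>D\<in>B. (if D = C then sC C else 0))"
    using C mC_pos[OF C] by (intro sum.cong) (auto simp: inner_vv)
  also have "\<dots> = sC C" using C finB by simp
  finally show ?thesis .
qed

lemma inner_z1: "z \<bullet> one = \<gamma>"
proof -
  have "z \<bullet> one = (\<Sum>D\<in>B. (sC D / mC D) * (vC D \<bullet> one))"
    unfolding z_def by (simp add: inner_sum_left)
  also have "\<dots> = \<gamma>" unfolding \<gamma>_def gam
    by (intro sum.cong) (auto simp: inner_v1 power2_eq_square)
  finally show ?thesis .
qed

lemma Nv_v: "C \<in> B \<Longrightarrow> N *v vC C = (1/\<alpha>) *\<^sub>R (vC C - (\<beta> * sC C) *\<^sub>R z)"
proof -
  assume C: "C \<in> B"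
  have "(\<Sum>D\<in>B. ((vC D \<bullet> vC C) / mC D) *\<^sub>R vC D) = (\<Sum>D\<in>B. (if D = C then vC C else 0))"
    using C mC_pos[OF C] by (intro sum.cong) (auto simp: inner_vv)
  also have "\<dots> = vC C" using C finB by simp
  finally show ?thesis unfolding Nv using inner_zv[OF C] by simp
qed

lemma Nv_1: "N *v one = (1/\<alpha>) *\<^sub>R (z - (\<beta> * \<gamma>) *\<^sub>R z)"
proof -
  have "(\<Sum>D\<in>B. ((vC D \<bullet> one) / mC D) *\<^sub>R vC D) = z"
    unfolding z_def by (intro sum.cong) (auto simp: inner_v1)
  then show ?thesis unfolding Nv using inner_z1 by (simp add: inner_commute)
qed


lemma Sv: "S *v y = \<alpha> *\<^sub>R y + (l * (one \<bullet> y)) *\<^sub>R one"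
proof -
  have "(S *v y)$k = (\<alpha> *\<^sub>R y + (l * (one \<bullet> y)) *\<^sub>R one)$k" for k
  proof -
    have "(S *v y)$k = (\<Sum>j\<in>UNIV. (\<alpha> * (if k = j then 1 else 0) + l) * y$j)"
      unfolding S_def by (simp add: matrix_vector_mult_def mat_def)
    also have "\<dots> = (\<Sum>j\<in>UNIV. (if k = j then \<alpha> * y$j else 0)) + l * (\<Sum>j\<in>UNIV. y$j)"
    proof -
      have "(\<alpha> * (if k = j then 1 else 0) + l) * y$j = (if k = j then \<alpha> * y$j else 0) + l * y$j" for j
        by (simp add: distrib_right)
      then show ?thesis by (simp only: sum.distrib sum_distrib_left)
    qed
    also have "\<dots> = \<alpha> * y$k + l * (\<Sum>j\<in>UNIV. y$j)" by simp
    finally show ?thesis by (simp add: one_def inner_vec_def)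
  qed
  then show ?thesis by (simp add: vec_eq_iff)
qed
lemma NSv: "C \<in> B \<Longrightarrow> N *v (S *v vC C) = vC C"
proof -
  assume C: "C \<in> B"
  have "N *v (S *v vC C) = \<alpha> *\<^sub>R (N *v vC C) + (l * sC C) *\<^sub>R (N *v one)"
    unfolding Sv using inner_v1[OF C]
    by (simp add: matrix_vector_right_distrib matrix_vector_mult_scaleR inner_commute)
  also have "\<dots> = vC C"
  proof -
    have key: "l * (1 - \<beta> * \<gamma>) = \<beta> * \<alpha>" using beta_eq by (simp add: algebra_simps)
    have "\<alpha> * (1/\<alpha>) * (a - \<beta> * s * b) + l * s * (1/\<alpha>) * (b - \<beta> * \<gamma> * b) = a" for a s b
    proof -
      have "l * s * (1/\<alpha>) * (b - \<beta> * \<gamma> * b) = s * b * (l * (1 - \<beta> * \<gamma>)) / \<alpha>"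
        using alpha_pos by (simp add: field_simps)
      also have "\<dots> = \<beta> * s * b" using key alpha_pos by simp
      finally show ?thesis using alpha_pos by simp
    qed
    then show ?thesis unfolding Nv_v[OF C] Nv_1 by (simp add: vec_eq_iff)
  qed
  finally show ?thesis .
qed

lemma Pv_v: "C \<in> B \<Longrightarrow> P *v vC C = 0"
  using Pv by (simp add: vec_eq_iff matrix_vector_mult_def vC_def)

lemma Pz: "P *v z = 0"
  unfolding z_def by (simp add: vec.sum matrix_vector_mult_scaleR Pv_v)

lemma PN: "P *v (N *v y) = 0"
  unfolding Nv by (simp add: matrix_vector_mult_scaleR matrix_vector_mult_diff_distrib vec.sum Pv_v Pz)

lemma ker_NS:
  assumes x: "P *v x = 0"
  shows "N *v (S *v x) = x"
proof -
  have xe: "x = (\<Sum>C\<in>B. cc x C *\<^sub>R vC C)"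
    using ker_decomp[OF x] by (simp add: vec_eq_iff sum_component vC_def)
  have "N *v (S *v x) = (\<Sum>C\<in>B. cc x C *\<^sub>R (N *v (S *v vC C)))"
    by (subst xe) (simp add: vec.sum matrix_vector_mult_scaleR)
  also have "\<dots> = (\<Sum>C\<in>B. cc x C *\<^sub>R vC C)"
    by (intro sum.cong) (simp_all add: NSv)
  finally show ?thesis using xe by simp
qed

lemma N_sym: "u \<bullet> (N *v v) = v \<bullet> (N *v u)"
  unfolding Nv by (simp add: inner_diff_right inner_sum_right algebra_simps inner_commute)

lemma S_sym: "u \<bullet> (S *v v) = v \<bullet> (S *v u)"
  unfolding Sv by (simp add: inner_add_right algebra_simps inner_commute)

lemma range_P:
  assumes "\<And>x. P *v x = 0 \<Longrightarrow> x \<bullet> y = 0"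
  shows "\<exists>w. P *v w = y"
proof -
  let ?f = "(*v) P"
  have lin: "linear ?f" by (rule matrix_vector_mul_linear)
  have "?f -` {0} = (range (adjoint ?f))\<^sup>\<bottom>" by (rule ker_orthogonal_comp_adjoint[OF lin])
  also have "adjoint ?f = ?f" using adjoint_matrix PT by metis
  finally have k: "?f -` {0} = (range ?f)\<^sup>\<bottom>" .
  have "y \<in> (?f -` {0})\<^sup>\<bottom>"
    using assms unfolding orthogonal_comp_def orthogonal_def by auto
  also have "\<dots> = range ?f" unfolding k
    by (rule orthogonal_comp_self) (simp add: lin linear_subspace_image)
  finally show ?thesis by auto
qed

lemma Mv: "(S + t *\<^sub>R P) *v u = S *v u + t *\<^sub>R (P *v u)"
  by (simp add: matrix_vector_mult_add_rdistrib scaleR_matrix_vector_assoc)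

lemma quad_S: "x \<bullet> (S *v x) \<ge> \<alpha> * (x \<bullet> x)"
proof -
  have "x \<bullet> (S *v x) = \<alpha> * (x \<bullet> x) + l * (one \<bullet> x)^2"
    unfolding Sv by (simp add: inner_add_right power2_eq_square inner_commute)
  then show ?thesis using lpos by simp
qed

lemma quad_M: "t \<ge> 0 \<Longrightarrow> x \<bullet> ((S + t *\<^sub>R P) *v x) \<ge> \<alpha> * (x \<bullet> x) + t * (x \<bullet> (P *v x))"
  unfolding Mv using quad_S by (simp add: inner_add_right)

lemma inv_M:
  assumes t: "t > 0"
  shows "matrix_inv (S + t *\<^sub>R P) ** (S + t *\<^sub>R P) = mat 1 \<and> (S + t *\<^sub>R P) ** matrix_inv (S + t *\<^sub>R P) = mat 1"
proof -
  let ?M = "S + t *\<^sub>R P"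
  have "\<forall>x. ?M *v x = 0 \<longrightarrow> x = 0"
  proof (intro allI impI)
    fix x assume "?M *v x = 0"
    then have "\<alpha> * (x \<bullet> x) + t * (x \<bullet> (P *v x)) \<le> 0" using quad_M[of t x] t by simp
    moreover have "t * (x \<bullet> (P *v x)) \<ge> 0" using qf_nn t by simp
    ultimately have "\<alpha> * (x \<bullet> x) \<le> 0" by linarith
    then have "x \<bullet> x \<le> 0" using alpha_pos by (simp add: mult_le_0_iff)
    then show "x = 0" by (metis antisym inner_ge_zero inner_eq_zero_iff)
  qed
  then have "invertible ?M" using matrix_left_invertible_ker invertible_left_inverse by blast
  then have "\<exists>A'. ?M ** A' = mat 1 \<and> A' ** ?M = mat 1" unfolding invertible_def by blast
  then have "?M ** matrix_inv ?M = mat 1 \<and> matrix_inv ?M ** ?M = mat 1"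
    unfolding matrix_inv_def by (rule someI_ex)
  then show ?thesis by simp
qed

lemma bound:
  assumes t: "t > 0" and e: "(S + t *\<^sub>R P) *v x = P *v w"
  shows "(x \<bullet> x) * (2 * t * \<alpha>) \<le> w \<bullet> (P *v w)"
proof -
  define q where "q = x \<bullet> (P *v x)"
  define p where "p = x \<bullet> (P *v w)"
  define c where "c = w \<bullet> (P *v w)"
  define a where "a = x \<bullet> x"
  have q0: "q \<ge> 0" unfolding q_def by (rule qf_nn)
  have h1: "\<alpha> * a + t * q \<le> p" using quad_M[of t x] t e unfolding a_def q_def p_def by simp
  have "(t *\<^sub>R x - w) \<bullet> (P *v (t *\<^sub>R x - w)) \<ge> 0" by (rule qf_nn)
  moreover have "(t *\<^sub>R x - w) \<bullet> (P *v (t *\<^sub>R x - w)) = t*t*q - t * p - t * (w \<bullet> (P *v x)) + c"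
    unfolding q_def p_def c_def
    by (simp add: matrix_vector_mult_diff_distrib matrix_vector_mult_scaleR inner_diff_left inner_diff_right algebra_simps)
  moreover have "w \<bullet> (P *v x) = p" unfolding p_def by (rule bil_sym)
  ultimately have h2: "2 * (p * t) \<le> t*t*q + c" by simp
  have "2 * t * (\<alpha> * a + t * q) \<le> 2 * (p * t)" using h1 t by (simp add: mult.commute)
  then have "2 * t * \<alpha> * a \<le> c - t * t * q" using h2 by (simp add: algebra_simps)
  moreover have "t * t * q \<ge> 0" using q0 t by simp
  ultimately show ?thesis unfolding a_def c_def by (simp add: algebra_simps)
qed

lemma limit: "((\<lambda>t. matrix_inv (S + t *\<^sub>R P)) \<longlongrightarrow> N) at_top"
proof -
  define y where "y j = axis j 1 - S *v (N *v axis j 1)" for j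
  have "\<exists>w. P *v w = y j" for j
  proof (rule range_P)
    fix x assume x: "P *v x = (0::real^'n)"
    have "x \<bullet> (S *v (N *v axis j 1)) = (N *v axis j 1) \<bullet> (S *v x)" by (rule S_sym)
    also have "\<dots> = (S *v x) \<bullet> (N *v axis j 1)" by (rule inner_commute)
    also have "\<dots> = axis j 1 \<bullet> (N *v (S *v x))" by (rule N_sym)
    also have "\<dots> = x \<bullet> axis j 1" using ker_NS[OF x] by (simp add: inner_commute)
    finally show "x \<bullet> y j = 0" unfolding y_def by (simp add: inner_diff_right)
  qed
  then obtain W where W: "\<And>j. P *v W j = y j" by metis
  define c where "c j = W j \<bullet> (P *v W j)" for j
  have comp: "norm ((matrix_inv (S + t *\<^sub>R P) - N) $ i $ j) \<le> sqrt (c j / (2 * \<alpha>) * inverse t)"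
    if t: "t > 0" for t i j
  proof -
    let ?M = "S + t *\<^sub>R P"
    let ?Mi = "matrix_inv ?M"
    have li: "?Mi *v (?M *v u) = u" for u
      using inv_M[OF t] by (metis matrix_vector_mul_assoc matrix_vector_mul_lid)
    have ri: "?M *v (?Mi *v u) = u" for u
      using inv_M[OF t] by (metis matrix_vector_mul_assoc matrix_vector_mul_lid)
    define x where "x = ?Mi *v y j"
    have "S *v (N *v axis j 1) = ?M *v (N *v axis j 1)" unfolding Mv PN by simp
    then have "x = ?Mi *v axis j 1 - N *v axis j 1"
      unfolding x_def y_def by (simp add: matrix_vector_mult_diff_distrib li)
    then have xi: "x $ i = (?Mi - N) $ i $ j"
      by (simp add: matrix_vector_mult_basis column_def)
    have "?M *v x = P *v W j" unfolding x_def ri W ..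
    then have "(x \<bullet> x) * (2 * t * \<alpha>) \<le> c j" unfolding c_def by (rule bound[OF t])
    then have "x \<bullet> x \<le> c j / (2 * \<alpha>) * inverse t"
      using t alpha_pos by (simp add: field_simps)
    then have s1: "sqrt (x \<bullet> x) \<le> sqrt (c j / (2 * \<alpha>) * inverse t)" by (rule real_sqrt_le_mono)
    have "norm (x $ i) \<le> norm x" by (rule Finite_Cartesian_Product.norm_nth_le)
    then have s2: "norm (x $ i) \<le> sqrt (x \<bullet> x)" by (simp add: norm_eq_sqrt_inner)
    show ?thesis using order_trans[OF s2 s1] xi by simp
  qed
  have "((\<lambda>t. matrix_inv (S + t *\<^sub>R P) - N) \<longlongrightarrow> 0) at_top"
  proof (intro vec_tendstoI)
    fix i j
    have g: "((\<lambda>t. sqrt (c j / (2 * \<alpha>) * inverse t)) \<longlongrightarrow> 0) at_top"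
      using tendsto_real_sqrt[OF tendsto_mult_right_zero[OF tendsto_inverse_0_at_top[OF filterlim_ident], of "c j / (2 * \<alpha>)"]]
      by (simp only: real_sqrt_zero)
    have "((\<lambda>t. (matrix_inv (S + t *\<^sub>R P) - N) $ i $ j) \<longlongrightarrow> 0) at_top"
    proof (rule Lim_null_comparison[OF _ g])
      show "\<forall>\<^sub>F t in at_top. norm ((matrix_inv (S + t *\<^sub>R P) - N) $ i $ j) \<le> sqrt (c j / (2 * \<alpha>) * inverse t)"
        using eventually_gt_at_top[of "0::real"] by eventually_elim (rule comp)
    qed
    then show "((\<lambda>t. (matrix_inv (S + t *\<^sub>R P) - N) $ i $ j) \<longlongrightarrow> 0 $ i $ j) at_top" by simp
  qed
  then show ?thesis by (rule LIM_zero_cancel)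
qed

definition dd where "dd = (\<Sum>D\<in>B. \<bar>sC D\<bar>)"
definition rs :: "'n \<Rightarrow> real" where "rs k = (\<Sum>j\<in>UNIV. \<bar>N$k$j\<bar>)"
definition gC where "gC C = 1/\<alpha> + l / (\<alpha> * (\<alpha> + l * \<gamma>)) * (\<bar>sC C\<bar> * (dd - 2 * \<bar>sC C\<bar>) / mC C)"

lemma z_in: "D \<in> B \<Longrightarrow> j \<in> D \<Longrightarrow> z$j = sC D / mC D * sg D j"
  unfolding z_comp by (rule sum_B_single)

lemma z_out: "\<not> (\<exists>D\<in>B. j \<in> D) \<Longrightarrow> z$j = 0"
  unfolding z_comp using sg_out by (intro sum.neutral) auto

lemma N_row_out: "\<not> (\<exists>C\<in>B. k \<in> C) \<Longrightarrow> N$k$j = 0"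
proof -
  assume a: "\<not> (\<exists>C\<in>B. k \<in> C)"
  have "(\<Sum>D\<in>B. sg D k * sg D j / mC D) = 0" using a sg_out by (intro sum.neutral) auto
  then show ?thesis unfolding N_def using z_out[OF a] by simp
qed

lemma N_row_in: "C \<in> B \<Longrightarrow> k \<in> C \<Longrightarrow> N$k$j = (1/\<alpha>) * sg C k * (sg C j / mC C - \<beta> * (sC C / mC C) * z$j)"
proof -
  assume C: "C \<in> B" "k \<in> C"
  have "(\<Sum>D\<in>B. sg D k * sg D j / mC D) = (\<Sum>D\<in>B. (sg D j / mC D) * sg D k)"
    by (simp add: mult.commute)
  also have "\<dots> = (sg C j / mC C) * sg C k" by (rule sum_B_single[OF C])
  finally show ?thesis unfolding N_def using z_in[OF C] by (simp add: algebra_simps)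
qed

lemma beta_pos: "\<beta> > 0" unfolding \<beta>_def using lpos den_pos by simp

lemma beta_gamma: "\<beta> * \<gamma> < 1"
proof -
  have "\<beta> * \<gamma> * (\<alpha> + l * \<gamma>) = l * \<gamma>" using beta_eq by (simp add: algebra_simps)
  then have "\<beta> * \<gamma> = l * \<gamma> / (\<alpha> + l * \<gamma>)" using den_pos by (simp add: field_simps)
  also have "\<dots> < 1" using den_pos alpha_pos by simp
  finally show ?thesis .
qed

lemma term_le_gamma: "C \<in> B \<Longrightarrow> (sC C)^2 / mC C \<le> \<gamma>"
  unfolding \<gamma>_def gam using finB mC_pos
  by (intro member_le_sum) (auto intro: divide_nonneg_pos)

end

context ctx begin
lemma rs_in:
  assumes C: "C \<in> B" and k: "k \<in> C"
  shows "rs k = gC C"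
proof -
  define h where "h j = (1/\<alpha>) * \<bar>sg C j / mC C - \<beta> * (sC C / mC C) * z$j\<bar>" for j
  have mpos: "mC C > 0" using mC_pos[OF C] .
  have rk: "\<bar>N$k$j\<bar> = h j" for j
    unfolding N_row_in[OF C k] h_def using sg_abs[OF C k] alpha_pos by (simp add: abs_mult)
  have hsplit: "h j = (\<Sum>D\<in>B. if j \<in> D then h j else 0)" for j
  proof (cases "\<exists>D\<in>B. j \<in> D")
    case True
    then obtain D where D: "D \<in> B" "j \<in> D" by blast
    have "(\<Sum>D'\<in>B. if j \<in> D' then h j else 0) = (\<Sum>D'\<in>B. if D' = D then h j else 0)"
    proof (rule sum.cong[OF refl])
      fix D' assume "D' \<in> B"
      then have "j \<in> D' \<longleftrightarrow> D' = D" using B_disj[OF D(1) _ D(2)] D by blast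
      then show "(if j \<in> D' then h j else 0) = (if D' = D then h j else 0)" by simp
    qed
    then show ?thesis using D finB by simp
  next
    case False
    then have "j \<notin> C" using C by blast
    then have "h j = 0" unfolding h_def using z_out[OF False] sg_out[OF C] by simp
    then have "(\<Sum>D\<in>B. if j \<in> D then h j else 0) = (\<Sum>D\<in>B. (0::real))"
      by (intro sum.cong) auto
    then show ?thesis using \<open>h j = 0\<close> by simp
  qed
  have "rs k = (\<Sum>j\<in>UNIV. h j)" unfolding rs_def using rk by simp
  also have "\<dots> = (\<Sum>j\<in>UNIV. \<Sum>D\<in>B. if j \<in> D then h j else 0)" using hsplit by (intro sum.cong) auto
  also have "\<dots> = (\<Sum>D\<in>B. \<Sum>j\<in>UNIV. if j \<in> D then h j else 0)" by (rule sum.swap)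
  also have "\<dots> = (\<Sum>D\<in>B. \<Sum>j\<in>D. h j)" by (simp add: sum.If_cases)
  also have "\<dots> = (\<Sum>D\<in>B. if D = C then (1/\<alpha>) * (1 - \<beta> * (sC C)^2 / mC C)
                             else (1/\<alpha>) * \<beta> * \<bar>sC C\<bar> * \<bar>sC D\<bar> / mC C)"
  proof (intro sum.cong refl)
    fix D assume D: "D \<in> B"
    show "(\<Sum>j\<in>D. h j) = (if D = C then (1/\<alpha>) * (1 - \<beta> * (sC C)^2 / mC C)
                             else (1/\<alpha>) * \<beta> * \<bar>sC C\<bar> * \<bar>sC D\<bar> / mC C)"
    proof (cases "D = C")
      case True
      have nn: "1 - \<beta> * (sC C)^2 / mC C \<ge> 0"
      proof -
        have "\<beta> * ((sC C)^2 / mC C) \<le> \<beta> * \<gamma>" by (rule mult_left_mono[OF term_le_gamma[OF C]]) (use beta_pos in simp)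
        then show ?thesis using beta_gamma by simp
      qed
      have "h j = (1/\<alpha>) * (1 - \<beta> * (sC C)^2 / mC C) / mC C" if j: "j \<in> C" for j
      proof -
        have "sg C j / mC C - \<beta> * (sC C / mC C) * z$j = sg C j * ((1 - \<beta> * (sC C)^2 / mC C) / mC C)"
          using z_in[OF C j] mpos by (simp add: field_simps power2_eq_square)
        then show ?thesis unfolding h_def using sg_abs[OF C j] nn mpos by (simp add: abs_mult)
      qed
      then have "(\<Sum>j\<in>D. h j) = mC C * ((1/\<alpha>) * (1 - \<beta> * (sC C)^2 / mC C) / mC C)"
        using True unfolding mC_def by simp
      then show ?thesis using True mpos by simp
    next
      case False
      have mD: "mC D > 0" using mC_pos[OF D] .
      have "h j = (1/\<alpha>) * \<beta> * \<bar>sC C\<bar> * \<bar>sC D\<bar> / mC C / mC D" if j: "j \<in> D" for j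
      proof -
        have "sg C j = 0" using sg_out[OF C] B_disj[OF C D] j False by auto
        then have "\<bar>sg C j / mC C - \<beta> * (sC C / mC C) * z$j\<bar> = \<beta> * \<bar>sC C\<bar> * \<bar>sC D\<bar> / mC C / mC D"
          using z_in[OF D j] sg_abs[OF D j] beta_pos mpos mD by (simp add: abs_mult)
        then show ?thesis unfolding h_def by simp
      qed
      then have "(\<Sum>j\<in>D. h j) = mC D * ((1/\<alpha>) * \<beta> * \<bar>sC C\<bar> * \<bar>sC D\<bar> / mC C / mC D)"
        unfolding mC_def by simp
      then show ?thesis using False mD by simp
    qed
  qed
  also have "\<dots> = (1/\<alpha>) * (1 - \<beta> * (sC C)^2 / mC C) + (\<Sum>D\<in>B - {C}. (1/\<alpha>) * \<beta> * \<bar>sC C\<bar> * \<bar>sC D\<bar> / mC C)"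
    using finB C by (simp add: sum.remove)
  also have "(\<Sum>D\<in>B - {C}. (1/\<alpha>) * \<beta> * \<bar>sC C\<bar> * \<bar>sC D\<bar> / mC C) = (1/\<alpha>) * \<beta> * \<bar>sC C\<bar> / mC C * (dd - \<bar>sC C\<bar>)"
  proof -
    have "(\<Sum>D\<in>B - {C}. \<bar>sC D\<bar>) = dd - \<bar>sC C\<bar>" unfolding dd_def using finB C by (simp add: sum_diff1)
    moreover have "(\<Sum>D\<in>B - {C}. (1/\<alpha>) * \<beta> * \<bar>sC C\<bar> * \<bar>sC D\<bar> / mC C)
        = (\<Sum>D\<in>B - {C}. ((1/\<alpha>) * \<beta> * \<bar>sC C\<bar> / mC C) * \<bar>sC D\<bar>)"
      by (intro sum.cong) auto
    moreover have "\<dots> = ((1/\<alpha>) * \<beta> * \<bar>sC C\<bar> / mC C) * (\<Sum>D\<in>B - {C}. \<bar>sC D\<bar>)"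
      by (rule sum_distrib_left[symmetric])
    ultimately show ?thesis by simp
  qed
  also have "(1/\<alpha>) * (1 - \<beta> * (sC C)^2 / mC C) + (1/\<alpha>) * \<beta> * \<bar>sC C\<bar> / mC C * (dd - \<bar>sC C\<bar>) = gC C"
  proof -
    have b: "\<beta> / \<alpha> = l / (\<alpha> * (\<alpha> + l * \<gamma>))" unfolding \<beta>_def by simp
    have sq: "(sC C)^2 = \<bar>sC C\<bar> * \<bar>sC C\<bar>" by (simp add: power2_eq_square abs_mult_self_eq)
    show ?thesis unfolding gC_def b[symmetric] sq using alpha_pos mpos by (simp add: field_simps)
  qed
  finally show ?thesis .
qed


lemma rs_out: "\<not> (\<exists>C\<in>B. k \<in> C) \<Longrightarrow> rs k = 0"
  unfolding rs_def using N_row_out by simp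

lemma rs_nn: "rs k \<ge> 0" unfolding rs_def by (simp add: sum_nonneg)

lemma norm_empty: "B = {} \<Longrightarrow> norm_inf N = 0"
proof -
  assume "B = {}"
  then have "rs k = 0" for k using rs_out by simp
  then have "range rs = {0}" by auto
  then show ?thesis unfolding norm_inf_def rs_def[symmetric] by simp
qed

lemma norm_ne: "B \<noteq> {} \<Longrightarrow> norm_inf N = Max (gC ` B)"
proof -
  assume ne: "B \<noteq> {}"
  have fin: "finite (gC ` B)" using finB by simp
  obtain C0 where C0: "C0 \<in> B" "gC C0 = Max (gC ` B)"
  proof -
    have "Max (gC ` B) \<in> gC ` B" using Max_in[OF fin] ne by simp
    then show ?thesis using that by auto
  qed
  obtain k0 where k0: "k0 \<in> C0" using B_sub[OF C0(1)] components_eq in_comp_self by auto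
  have "Max (range rs) = Max (gC ` B)"
  proof (rule Max_eqI)
    show "finite (range rs)" by simp
  next
    fix y assume "y \<in> range rs"
    then obtain k where y: "y = rs k" by auto
    show "y \<le> Max (gC ` B)"
    proof (cases "\<exists>C\<in>B. k \<in> C")
      case True
      then obtain C where "C \<in> B" "k \<in> C" by auto
      then show ?thesis using y rs_in fin by auto
    next
      case False
      then have "y = 0" using y rs_out by simp
      also have "0 \<le> rs k0" by (rule rs_nn)
      also have "rs k0 = Max (gC ` B)" using rs_in[OF C0(1) k0] C0(2) by simp
      finally show ?thesis by simp
    qed
  next
    show "Max (gC ` B) \<in> range rs" using rs_in[OF C0(1) k0] C0(2) by (metis rangeI)
  qed
  then show ?thesis unfolding norm_inf_def rs_def[symmetric] .
qed


end

theorem corollary4p10: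
  fixes P :: "real^'n^'n" and \<alpha> l :: real
  assumes "CARD('n) \<ge> 3"
    and "l > 0"
    and "\<alpha> \<ge> (real CARD('n) - 2) * l"
    and "signless_laplacian P"
  shows "\<exists>N. ((\<lambda>t::real. matrix_inv ((\<alpha> *\<^sub>R mat 1 + l *\<^sub>R (\<chi> i j. 1)) + t *\<^sub>R P))
                \<longlongrightarrow> N) at_top
           \<and> (card (bipartite_components P) = 0 \<longrightarrow> norm_inf N = 0)
           \<and> (card (bipartite_components P) \<ge> 1 \<longrightarrow>
                (let d = (\<Sum>C\<in>bipartite_components P. imbalance P C) in
                 norm_inf N = 1 / \<alpha> + l / (\<alpha> * (\<alpha> + l * gamma P)) *
                   Max ((\<lambda>C. imbalance P C * (d - 2 * imbalance P C) / real (card C))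
                          ` bipartite_components P)))"
proof -
  interpret ctx P \<alpha> l using assms by (unfold_locales) auto
  have L: "((\<lambda>t::real. matrix_inv ((\<alpha> *\<^sub>R mat 1 + l *\<^sub>R (\<chi> i j. 1)) + t *\<^sub>R P)) \<longlongrightarrow> N) at_top"
    using limit unfolding S_def .
  have ne_main: "norm_inf N = 1 / \<alpha> + l / (\<alpha> * (\<alpha> + l * gamma P)) *
                   Max ((\<lambda>C. imbalance P C * ((\<Sum>C\<in>bipartite_components P. imbalance P C) - 2 * imbalance P C) / real (card C))
                          ` bipartite_components P)"
    if ne: "bipartite_components P \<noteq> {}"
  proof -
    define c where "c = l / (\<alpha> * (\<alpha> + l * \<gamma>))"
    define f where "f C = \<bar>sC C\<bar> * (dd - 2 * \<bar>sC C\<bar>) / mC C" for C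
    have c0: "c \<ge> 0" unfolding c_def using lpos alpha_pos den_pos by simp
    have mono: "mono (\<lambda>x. 1/\<alpha> + c * x)" using c0 by (simp add: mono_def mult_left_mono)
    have fin: "finite (f ` B)" using finB by simp
    have "norm_inf N = Max (gC ` B)" by (rule norm_ne[OF ne])
    also have "gC ` B = (\<lambda>x. 1/\<alpha> + c * x) ` (f ` B)"
      unfolding gC_def c_def f_def image_image ..
    also have "Max \<dots> = 1/\<alpha> + c * Max (f ` B)"
      using mono_Max_commute[OF mono fin] ne by simp
    also have "f ` B = (\<lambda>C. imbalance P C * ((\<Sum>C\<in>bipartite_components P. imbalance P C) - 2 * imbalance P C) / real (card C))
                          ` bipartite_components P"
      unfolding f_def dd_def imb mC_def ..
    finally show ?thesis unfolding c_def \<gamma>_def .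
  qed
  show ?thesis
  proof (intro exI conjI impI)
    show "((\<lambda>t::real. matrix_inv ((\<alpha> *\<^sub>R mat 1 + l *\<^sub>R (\<chi> i j. 1)) + t *\<^sub>R P)) \<longlongrightarrow> N) at_top" by (rule L)
  next
    assume "card (bipartite_components P) = 0"
    then have "bipartite_components P = {}" using finB by simp
    then show "norm_inf N = 0" by (rule norm_empty)
  next
    assume "card (bipartite_components P) \<ge> 1"
    then have "bipartite_components P \<noteq> {}" by auto
    then show "let d = (\<Sum>C\<in>bipartite_components P. imbalance P C) in
                 norm_inf N = 1 / \<alpha> + l / (\<alpha> * (\<alpha> + l * gamma P)) *
                   Max ((\<lambda>C. imbalance P C * (d - 2 * imbalance P C) / real (card C))
                          ` bipartite_components P)"
      unfolding Let_def by (rule ne_main)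
  qed
qed

end
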